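(* Let $\mathcal{C}$ be an $[n,k,d]_q$ linear code with two $(r_i,\delta_i)_{i\in\{1,2\}}$ localities with respect to the sets $\mathcal{T}_1$, $\mathcal{T}_2=[n]\setminus\mathcal{T}_1$, where $n_i=|\mathcal{T}_i|$, $r_1\le r_2$ and $\delta_1\ge\delta_2\ge2$. Put $\Delta=\lceil n_1/(r_1+\delta_1-1)\rceil(\delta_1-1)$. If $r_1\lceil n_1/(r_1+\delta_1-1)\rceil\le k-1$ and $r_1\lceil(\Delta-1)/(\delta_1-1)\rceil+(\Delta-1)<n_1$, then $$d\le n-k+1-\left\lceil\frac{n_1}{r_1+\delta_1-1}\right\rceil(\delta_1-1)-\left(\left\lceil\frac{k-r_1\lceil n_1/(r_1+\delta_1-1)\rceil}{r_2}\right\rceil-1\right)(\delta_2-1).$$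
   Context: $[n]=\{1,\dots,n\}$. For an $[n,k,d]_q$ linear code with generator matrix columns $\vec g_1,\dots,\vec g_n$, a regenerating set of coordinate $i$ is a (minimal) subset $R\subseteq[n]$ with $i\in R$ such that $\vec g_i$ is an $\mathbb{F}_q$-linear combination of $\{\vec g_j\}_{j\in R\setminus\{i\}}$ and no proper subset of $R\setminus\{i\}$ suffices; $\mathcal{R}_i$ is the set of all regenerating sets of coordinate $i$. The code has two $(r_i,\delta_i)_{i\in\{1,2\}}$ localities if $\mathcal{T}_1\subseteq[n]$, $\mathcal{T}_2=[n]\setminus\mathcal{T}_1$, $r_1\le r_2$, $\delta_1\ge\delta_2\ge2$ are integers, and for $i=1,2$ and each $\iota\in\mathcal{T}_i$ there is $S_\iota\subseteq\mathcal{T}_i$ with $\iota\in S_\iota$, $\delta_i\le|S_\iota|\le r_i+\delta_i-1$, such that for every $E\subseteq S_\iota$ with $|E|=\delta_i-1$ and every $j\in E$, $(S_\iota\setminus E)\cup\{j\}\in\mathcal{R}_j$. *)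

theory Defs
  imports Complex_Main
begin

text \<open>A linear code of length n and dimension k over a finite field 'a is given by a
  k x n generator matrix G: entry G r i for row r < k and coordinate i in {1..n}.
  The column g_i is the vector (G r i) for r < k.\<close>

definition codeword :: "(nat \<Rightarrow> nat \<Rightarrow> 'a::field) \<Rightarrow> nat \<Rightarrow> (nat \<Rightarrow> 'a) \<Rightarrow> nat \<Rightarrow> 'a" where
  "codeword G k m i = (\<Sum>r<k. m r * G r i)"

definition full_rank :: "(nat \<Rightarrow> nat \<Rightarrow> 'a::field) \<Rightarrow> nat \<Rightarrow> nat \<Rightarrow> bool" where
  "full_rank G k n = (\<forall>m. (\<forall>i\<in>{1..n}. codeword G k m i = 0) \<longrightarrow> (\<forall>r<k. m r = 0))"

definition min_dist :: "(nat \<Rightarrow> nat \<Rightarrow> 'a::field) \<Rightarrow> nat \<Rightarrow> nat \<Rightarrow> nat" where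
  "min_dist G k n = Min {card {i\<in>{1..n}. codeword G k m i \<noteq> 0} | m.
                           \<exists>i\<in>{1..n}. codeword G k m i \<noteq> 0}"

definition lin_comb_of :: "(nat \<Rightarrow> nat \<Rightarrow> 'a::field) \<Rightarrow> nat \<Rightarrow> nat \<Rightarrow> nat set \<Rightarrow> bool" where
  "lin_comb_of G k i S = (\<exists>a. \<forall>r<k. G r i = (\<Sum>j\<in>S. a j * G r j))"

definition regenerating_set :: "(nat \<Rightarrow> nat \<Rightarrow> 'a::field) \<Rightarrow> nat \<Rightarrow> nat \<Rightarrow> nat \<Rightarrow> nat set \<Rightarrow> bool" where
  "regenerating_set G k n i R =
     (R \<subseteq> {1..n} \<and> i \<in> R \<and> lin_comb_of G k i (R - {i}) \<and>
      (\<forall>S. S \<subset> R - {i} \<longrightarrow> \<not> lin_comb_of G k i S))"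

definition locality_on :: "(nat \<Rightarrow> nat \<Rightarrow> 'a::field) \<Rightarrow> nat \<Rightarrow> nat \<Rightarrow> nat set \<Rightarrow> nat \<Rightarrow> nat \<Rightarrow> bool" where
  "locality_on G k n T r \<delta> =
     (\<forall>\<iota>\<in>T. \<exists>S. S \<subseteq> T \<and> \<iota> \<in> S \<and> \<delta> \<le> card S \<and> card S \<le> r + \<delta> - 1 \<and>
        (\<forall>E. E \<subseteq> S \<and> card E = \<delta> - 1 \<longrightarrow>
              (\<forall>j\<in>E. regenerating_set G k n j ((S - E) \<union> {j}))))"

definition two_localities :: "(nat \<Rightarrow> nat \<Rightarrow> 'a::field) \<Rightarrow> nat \<Rightarrow> nat \<Rightarrow> nat set \<Rightarrow>
     nat \<Rightarrow> nat \<Rightarrow> nat \<Rightarrow> nat \<Rightarrow> bool" where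
  "two_localities G k n T1 r1 \<delta>1 r2 \<delta>2 =
     (T1 \<subseteq> {1..n} \<and> r1 \<le> r2 \<and> \<delta>1 \<ge> \<delta>2 \<and> \<delta>2 \<ge> 2 \<and>
      locality_on G k n T1 r1 \<delta>1 \<and> locality_on G k n ({1..n} - T1) r2 \<delta>2)"

end

theory Submission
  imports Defs
begin


definition msgs :: "nat \<Rightarrow> (nat \<Rightarrow> 'a::field) set" where
  "msgs k = {m. \<forall>r. k \<le> r \<longrightarrow> m r = 0}"

definition Ker :: "(nat \<Rightarrow> nat \<Rightarrow> 'a::field) \<Rightarrow> nat \<Rightarrow> nat set \<Rightarrow> (nat \<Rightarrow> 'a) set" where
  "Ker G k U = {m \<in> msgs k. \<forall>i\<in>U. codeword G k m i = 0}"

lemma finite_msgs: "finite (msgs k :: (nat \<Rightarrow> 'a::{finite,field}) set)"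
proof -
  have "msgs k = {f::nat\<Rightarrow>'a. \<forall>x. (x \<in> {..<k} \<longrightarrow> f x \<in> UNIV) \<and> (x \<notin> {..<k} \<longrightarrow> f x = 0)}"
    unfolding msgs_def by auto
  then show ?thesis using finite_set_of_finite_funs[of "{..<k}" "UNIV::'a set" 0] by simp
qed

lemma finite_Ker: "finite (Ker G k U :: (nat \<Rightarrow> 'a::{finite,field}) set)"
  using finite_msgs[of k] unfolding Ker_def by (rule finite_subset[rotated]) auto

lemma card_msgs: "card (UNIV::'a::{finite,field} set) ^ k \<le> card (msgs k :: (nat \<Rightarrow> 'a) set)"
proof (induction k)
  case 0
  have "msgs 0 = {(\<lambda>_. 0)::nat\<Rightarrow>'a}" unfolding msgs_def by auto
  then show ?case by simp
next
  case (Suc k)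
  define f where "f = (\<lambda>(m::nat\<Rightarrow>'a, c::'a). m(k := c))"
  have inj: "inj_on f (msgs k \<times> UNIV)"
  proof (rule inj_onI)
    fix x y assume x: "x \<in> msgs k \<times> UNIV" and y: "y \<in> msgs k \<times> UNIV" and e: "f x = f y"
    obtain m c where xx: "x = (m, c)" by (cases x)
    obtain m' c' where yy: "y = (m', c')" by (cases y)
    have mk: "m k = 0" "m' k = 0" using x y xx yy unfolding msgs_def by auto
    have "c = c'" using e xx yy unfolding f_def by (metis fun_upd_same prod.case)
    moreover have "m = m'"
    proof
      fix r show "m r = m' r"
        using e xx yy mk unfolding f_def by (cases "r = k") (auto dest: fun_cong[where x = r])
    qed
    ultimately show "x = y" using xx yy by simp
  qed
  have sub: "f ` (msgs k \<times> UNIV) \<subseteq> msgs (Suc k)"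
    unfolding f_def msgs_def by auto
  have "card ((msgs k :: (nat \<Rightarrow> 'a) set) \<times> (UNIV::'a set)) \<le> card (msgs (Suc k) :: (nat \<Rightarrow> 'a) set)"
    by (rule card_inj_on_le[OF inj sub]) (rule finite_msgs)
  then have "card (msgs k :: (nat \<Rightarrow> 'a) set) * card (UNIV::'a set) \<le> card (msgs (Suc k) :: (nat \<Rightarrow> 'a) set)"
    by (simp add: card_cartesian_product)
  moreover have "card (UNIV::'a set) ^ Suc k \<le> card (msgs k :: (nat \<Rightarrow> 'a) set) * card (UNIV::'a set)"
    using Suc by (simp add: mult.commute)
  ultimately show ?case by linarith
qed

lemma codeword_diff: "codeword G k (m - m') i = codeword G k m i - codeword G k m' i"
  unfolding codeword_def by (simp add: left_diff_distrib sum_subtractf)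

lemma Ker_diff: "m \<in> Ker G k U \<Longrightarrow> m' \<in> Ker G k U \<Longrightarrow> m - m' \<in> Ker G k U"
  unfolding Ker_def msgs_def by (auto simp: codeword_diff)

lemma Ker_mono: "U \<subseteq> V \<Longrightarrow> Ker G k V \<subseteq> Ker G k U"
  unfolding Ker_def by auto

lemma Ker_insert_card:
  fixes G :: "nat \<Rightarrow> nat \<Rightarrow> 'a::{finite,field}"
  shows "card (Ker G k U) \<le> card (UNIV::'a set) * card (Ker G k (insert i U))"
proof -
  define K where "K = Ker G k U"
  define K' where "K' = Ker G k (insert i U)"
  define p where "p = (\<lambda>c. SOME m0. m0 \<in> K \<and> codeword G k m0 i = c)"
  define f where "f = (\<lambda>m. (m - p (codeword G k m i), codeword G k m i))"
  have pK: "p (codeword G k m i) \<in> K \<and> codeword G k (p (codeword G k m i)) i = codeword G k m i"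
    if "m \<in> K" for m
    unfolding p_def by (rule someI[of _ m]) (use that in auto)
  have inj: "inj_on f K"
  proof (rule inj_onI)
    fix x y assume "x \<in> K" "y \<in> K" "f x = f y"
    then have "x - p (codeword G k x i) = y - p (codeword G k x i)" unfolding f_def by auto
    then show "x = y"
    proof -
      assume h: "x - p (codeword G k x i) = y - p (codeword G k x i)"
      show "x = y"
      proof
        fix r show "x r = y r" using fun_cong[OF h, of r] by simp
      qed
    qed
  qed
  have sub: "f ` K \<subseteq> K' \<times> UNIV"
  proof
    fix z assume "z \<in> f ` K"
    then obtain m where m: "m \<in> K" and z: "z = f m" by auto
    have a: "m - p (codeword G k m i) \<in> K" using Ker_diff m pK[OF m] unfolding K_def by blast
    have b: "codeword G k (m - p (codeword G k m i)) i = 0"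
      using pK[OF m] by (simp add: codeword_diff)
    have "m - p (codeword G k m i) \<in> K'" using a b unfolding K_def K'_def Ker_def by auto
    then show "z \<in> K' \<times> UNIV" using z unfolding f_def by auto
  qed
  have "card K \<le> card (K' \<times> (UNIV::'a set))"
    by (rule card_inj_on_le[OF inj sub]) (simp add: K'_def finite_Ker)
  then show ?thesis unfolding K_def K'_def by (simp add: card_cartesian_product mult.commute)
qed

lemma Ker_union_card:
  fixes G :: "nat \<Rightarrow> nat \<Rightarrow> 'a::{finite,field}"
  assumes "finite B"
  shows "card (Ker G k U) \<le> card (UNIV::'a set) ^ card B * card (Ker G k (U \<union> B))"
  using assms
proof (induction B rule: finite_induct)
  case empty then show ?case by simp
next
  case (insert x B)
  have "card (Ker G k (U \<union> B)) \<le> card (UNIV::'a set) * card (Ker G k (insert x (U \<union> B)))"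
    by (rule Ker_insert_card)
  then have "card (UNIV::'a set) ^ card B * card (Ker G k (U \<union> B))
      \<le> card (UNIV::'a set) ^ card B * (card (UNIV::'a set) * card (Ker G k (insert x (U \<union> B))))"
    by simp
  with insert.IH have "card (Ker G k U) \<le> card (UNIV::'a set) ^ card B * (card (UNIV::'a set) * card (Ker G k (insert x (U \<union> B))))"
    by linarith
  with insert show ?case by (simp add: mult.assoc mult.left_commute)
qed

lemma lin_comb_vanish:
  assumes "lin_comb_of G k j T" "m \<in> Ker G k T"
  shows "codeword G k m j = 0"
proof -
  obtain a where a: "\<forall>r<k. G r j = (\<Sum>l\<in>T. a l * G r l)" using assms(1) unfolding lin_comb_of_def by auto
  show ?thesis
  proof (cases "finite T")
    case False
    then show ?thesis using a unfolding codeword_def by simp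
  next
    case True
    have "codeword G k m j = (\<Sum>r<k. m r * (\<Sum>l\<in>T. a l * G r l))"
      unfolding codeword_def using a by simp
    also have "\<dots> = (\<Sum>l\<in>T. a l * (\<Sum>r<k. m r * G r l))"
      by (simp add: sum_distrib_left sum_distrib_right mult.assoc mult.left_commute sum.swap[of _ T])
    also have "\<dots> = 0" using assms(2) unfolding Ker_def codeword_def by simp
    finally show ?thesis .
  qed
qed



definition good_group :: "(nat \<Rightarrow> nat \<Rightarrow> 'a::field) \<Rightarrow> nat \<Rightarrow> nat set \<Rightarrow> nat \<Rightarrow> nat \<Rightarrow> bool" where
  "good_group G k S r \<delta> = (finite S \<and> \<delta> \<le> card S \<and> card S \<le> r + \<delta> - 1 \<and>
     (\<forall>E j m. E \<subseteq> S \<and> card E = \<delta> - 1 \<and> j \<in> E \<and> m \<in> Ker G k (S - E) \<longrightarrow> codeword G k m j = 0))"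

lemma locality_group:
  assumes "locality_on G k n T r \<delta>" "1 \<le> \<delta>" "\<iota> \<in> T"
  shows "\<exists>S. S \<subseteq> T \<and> \<iota> \<in> S \<and> good_group G k S r \<delta>"
proof -
  have "\<exists>S. S \<subseteq> T \<and> \<iota> \<in> S \<and> \<delta> \<le> card S \<and> card S \<le> r + \<delta> - 1 \<and>
        (\<forall>E. E \<subseteq> S \<and> card E = \<delta> - 1 \<longrightarrow>
              (\<forall>j\<in>E. regenerating_set G k n j ((S - E) \<union> {j})))"
    using assms(1,3) unfolding locality_on_def by (rule bspec)
  then obtain S where SS: "S \<subseteq> T \<and> \<iota> \<in> S \<and> \<delta> \<le> card S \<and> card S \<le> r + \<delta> - 1 \<and>
        (\<forall>E. E \<subseteq> S \<and> card E = \<delta> - 1 \<longrightarrow>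
              (\<forall>j\<in>E. regenerating_set G k n j ((S - E) \<union> {j})))" by (rule exE)
  have S: "S \<subseteq> T" "\<iota> \<in> S" "\<delta> \<le> card S" "card S \<le> r + \<delta> - 1" using SS by simp_all
  have R: "\<forall>E. E \<subseteq> S \<and> card E = \<delta> - 1 \<longrightarrow> (\<forall>j\<in>E. regenerating_set G k n j ((S - E) \<union> {j}))"
    using SS by simp
  have fin: "finite S"
  proof (rule ccontr)
    assume "infinite S" then have "card S = 0" by simp
    with S(3) assms(2) show False by simp
  qed
  have "codeword G k m j = 0" if "E \<subseteq> S" "card E = \<delta> - 1" "j \<in> E" "m \<in> Ker G k (S - E)" for E j m
  proof -
    have "regenerating_set G k n j ((S - E) \<union> {j})" using R that by blast
    then have "lin_comb_of G k j (((S - E) \<union> {j}) - {j})" unfolding regenerating_set_def by blast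
    moreover have "((S - E) \<union> {j}) - {j} = S - E" using that(3) by auto
    ultimately have "lin_comb_of G k j (S - E)" by simp
    from lin_comb_vanish[OF this that(4)] show ?thesis .
  qed
  then show ?thesis using S fin unfolding good_group_def by blast
qed



lemma greedy_step:
  fixes G :: "nat \<Rightarrow> nat \<Rightarrow> 'a::{finite,field}"
  assumes fin: "finite U" and g: "good_group G k S r \<delta>"
    and s: "s \<in> S" and m0: "m0 \<in> Ker G k U" "codeword G k m0 s \<noteq> 0"
  shows "\<exists>a. a \<le> r \<and> card (U \<union> S) = card U + a + (\<delta> - 1) \<and>
           card (Ker G k U) \<le> card (UNIV::'a set) ^ a * card (Ker G k (U \<union> S))"
proof -
  have Sfin: "finite S" and dl: "\<delta> \<le> card S" and du: "card S \<le> r + \<delta> - 1"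
    and rec: "\<And>E j m. E \<subseteq> S \<Longrightarrow> card E = \<delta> - 1 \<Longrightarrow> j \<in> E \<Longrightarrow> m \<in> Ker G k (S - E) \<Longrightarrow> codeword G k m j = 0"
    using g unfolding good_group_def by blast+
  define A where "A = S - U"
  have finA: "finite A" using Sfin A_def by simp
  have AS: "A \<subseteq> S" using A_def by auto
  have US: "U \<union> S = U \<union> A" using A_def by auto
  have cardUS: "card (U \<union> S) = card U + card A"
    unfolding US by (rule card_Un_disjoint) (use fin finA A_def in auto)
  have cAS: "card A \<le> card S" using card_mono[OF Sfin AS] .
  show ?thesis
  proof (cases "\<delta> - 1 \<le> card A")
    case True
    obtain E where E: "E \<subseteq> A" "card E = \<delta> - 1" using True by (rule obtain_subset_with_card_n)
    define B where "B = A - E"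
    have finB: "finite B" using finA B_def by simp
    have cardB: "card B = card A - (\<delta> - 1)" unfolding B_def using E finA
      by (simp add: card_Diff_subset finite_subset)
    have KE: "Ker G k (U \<union> B) \<subseteq> Ker G k (U \<union> S)"
    proof
      fix m assume m: "m \<in> Ker G k (U \<union> B)"
      have "S - E \<subseteq> U \<union> B" unfolding B_def A_def by auto
      then have mSE: "m \<in> Ker G k (S - E)" using Ker_mono m by blast
      have ES: "E \<subseteq> S" using E(1) AS by blast
      have "codeword G k m j = 0" if "j \<in> E" for j
        using rec[OF ES E(2) that mSE] .
      then show "m \<in> Ker G k (U \<union> S)" using m unfolding Ker_def B_def A_def by auto
    qed
    have "card (Ker G k U) \<le> card (UNIV::'a set) ^ card B * card (Ker G k (U \<union> B))"
      by (rule Ker_union_card[OF finB])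
    also have "\<dots> \<le> card (UNIV::'a set) ^ card B * card (Ker G k (U \<union> S))"
      using card_mono[OF finite_Ker KE] by simp
    finally have K: "card (Ker G k U) \<le> card (UNIV::'a set) ^ card B * card (Ker G k (U \<union> S))" .
    have "card B \<le> r" using cardB cAS du by linarith
    moreover have "card (U \<union> S) = card U + card B + (\<delta> - 1)" using cardB cardUS True by linarith
    ultimately show ?thesis using K by blast
  next
    case False
    have "\<delta> - 1 - card A \<le> card (S - A)" using dl cAS card_Diff_subset[OF finA AS] False by simp
    then obtain E' where E': "E' \<subseteq> S - A" "card E' = \<delta> - 1 - card A"
      by (rule obtain_subset_with_card_n)
    define E where "E = A \<union> E'"
    have finE': "finite E'" using E' Sfin finite_subset by blast
    have cE: "card E = \<delta> - 1" unfolding E_def using E' False finA finE'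
      by (subst card_Un_disjoint) auto
    have ES: "E \<subseteq> S" unfolding E_def using E' AS by auto
    have "S - E \<subseteq> U" unfolding E_def A_def by auto
    then have m0SE: "m0 \<in> Ker G k (S - E)" using Ker_mono m0(1) by blast
    show ?thesis
    proof (cases "s \<in> E")
      case True
      then show ?thesis using rec[OF ES cE True m0SE] m0(2) by simp
    next
      case False
      then have "s \<in> U" using s \<open>S - E \<subseteq> U\<close> by auto
      then show ?thesis using m0 unfolding Ker_def by auto
    qed
  qed
qed



lemma q_ge2: "2 \<le> card (UNIV::'a::{finite,field} set)"
proof -
  have "card {0::'a, 1} = 2" by simp
  moreover have "card {0::'a, 1} \<le> card (UNIV::'a set)" by (rule card_mono) auto
  ultimately show ?thesis by simp
qed

lemma nonzero_in_Ker:
  fixes G :: "nat \<Rightarrow> nat \<Rightarrow> 'a::{finite,field}"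
  assumes rank: "full_rank G k n"
    and inv: "card (UNIV::'a set) ^ k \<le> card (UNIV::'a set) ^ t * card (Ker G k U)"
    and tk: "t < k"
  shows "\<exists>m\<in>Ker G k U. \<exists>i\<in>{1..n}. codeword G k m i \<noteq> 0"
proof -
  let ?q = "card (UNIV::'a set)"
  have q2: "2 \<le> ?q" by (rule q_ge2)
  have "?q ^ t * ?q \<le> ?q ^ k"
  proof -
    have "?q ^ Suc t \<le> ?q ^ k" using tk q2 by (intro power_increasing) auto
    then show ?thesis by (simp add: mult.commute)
  qed
  with inv have "?q ^ t * ?q \<le> ?q ^ t * card (Ker G k U)" by linarith
  then have "?q \<le> card (Ker G k U)" using q2 by simp
  with q2 have c2: "2 \<le> card (Ker G k U)" by linarith
  have "\<not> Ker G k U \<subseteq> {\<lambda>_. 0}"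
  proof
    assume "Ker G k U \<subseteq> {\<lambda>_. 0}"
    then have "card (Ker G k U) \<le> card {(\<lambda>_. 0)::nat \<Rightarrow> 'a}" by (rule card_mono[rotated]) simp
    with c2 show False by simp
  qed
  then obtain m where m: "m \<in> Ker G k U" "m \<noteq> (\<lambda>_. 0)" by blast
  then obtain r where r: "m r \<noteq> 0" by auto
  have "r < k"
  proof (rule ccontr)
    assume "\<not> r < k" then have "k \<le> r" by simp
    with m(1) r show False unfolding Ker_def msgs_def by auto
  qed
  then have "\<not> (\<forall>i\<in>{1..n}. codeword G k m i = 0)" using rank r unfolding full_rank_def by blast
  then show ?thesis using m(1) by blast
qed



lemma phase1:
  fixes G :: "nat \<Rightarrow> nat \<Rightarrow> 'a::{finite,field}"
  assumes T1n: "T1 \<subseteq> {1..n}" and loc1: "locality_on G k n T1 r1 \<delta>1" and d1: "1 \<le> \<delta>1"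
    and hm: "\<And>j. j < m \<Longrightarrow> r1*j + m*(\<delta>1-1) \<le> card T1"
  shows "\<exists>U t. finite U \<and> U \<subseteq> {1..n} \<and> t \<le> r1*m \<and>
     card (UNIV::'a set)^k \<le> card (UNIV::'a set)^t * card (Ker G k U) \<and> t + m*(\<delta>1-1) \<le> card U"
proof -
  let ?q = "card (UNIV::'a set)"
  let ?Q = "\<lambda>j. \<exists>U t. finite U \<and> U \<subseteq> {1..n} \<and> t \<le> r1*m \<and> ?q^k \<le> ?q^t * card (Ker G k U) \<and>
     ((t \<le> r1*j \<and> t + j*(\<delta>1-1) \<le> card U) \<or> t + m*(\<delta>1-1) \<le> card U)"
  have finT1: "finite T1" using T1n finite_subset by blast
  have "?Q j" if "j \<le> m" for j
    using that
  proof (induction j)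
    case 0
    have "Ker G k {} = msgs k" unfolding Ker_def by simp
    then have "?q^k \<le> ?q^0 * card (Ker G k {})" using card_msgs[where 'a='a, of k] by simp
    then show ?case by (intro exI[of _ "{}"] exI[of _ 0]) simp
  next
    case (Suc j)
    then have jm: "j < m" by simp
    from Suc obtain U t where U: "finite U" "U \<subseteq> {1..n}" "t \<le> r1*m" "?q^k \<le> ?q^t * card (Ker G k U)"
      and disj: "(t \<le> r1*j \<and> t + j*(\<delta>1-1) \<le> card U) \<or> t + m*(\<delta>1-1) \<le> card U" by auto
    show ?case
    proof (cases "t + m*(\<delta>1-1) \<le> card U")
      case True then show ?thesis using U by blast
    next
      case False
      with disj have tj: "t \<le> r1*j" "t + j*(\<delta>1-1) \<le> card U" by auto
      show ?thesis
      proof (cases "\<exists>s\<in>T1. \<exists>m0\<in>Ker G k U. codeword G k m0 s \<noteq> 0")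
        case True
        then obtain s m0 where s: "s \<in> T1" "m0 \<in> Ker G k U" "codeword G k m0 s \<noteq> 0" by blast
        obtain S where S: "S \<subseteq> T1" "s \<in> S" "good_group G k S r1 \<delta>1"
          using locality_group[OF loc1 d1 s(1)] by blast
        obtain a where a: "a \<le> r1" "card (U \<union> S) = card U + a + (\<delta>1-1)"
          "card (Ker G k U) \<le> ?q^a * card (Ker G k (U \<union> S))"
          using greedy_step[OF U(1) S(3) S(2) s(2,3)] by blast
        have "?q^t * card (Ker G k U) \<le> ?q^t * (?q^a * card (Ker G k (U \<union> S)))"
          using a(3) by (rule mult_le_mono2)
        then have K0: "?q^k \<le> ?q^t * (?q^a * card (Ker G k (U \<union> S)))"
          using U(4) by (rule le_trans[rotated])
        have eq: "?q^t * (?q^a * card (Ker G k (U \<union> S))) = ?q^(t+a) * card (Ker G k (U \<union> S))"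
          by (simp only: power_add mult.assoc)
        have K: "?q^k \<le> ?q^(t+a) * card (Ker G k (U \<union> S))" using K0 by (simp only: eq)
        have t1: "t + a \<le> r1 * Suc j" using tj a by simp
        have "r1 * Suc j \<le> r1 * m" using Suc.prems by (rule mult_le_mono2)
        with t1 have t2: "t + a \<le> r1 * m" by linarith
        have c: "t + a + Suc j*(\<delta>1-1) \<le> card (U \<union> S)" using tj a by simp
        have f: "finite (U \<union> S)" "U \<union> S \<subseteq> {1..n}" using U S(1) S(3) T1n unfolding good_group_def by auto
        show ?thesis using f t1 t2 c K by blast
      next
        case False
        have KK: "Ker G k U \<subseteq> Ker G k (U \<union> T1)" using False unfolding Ker_def by auto
        have K: "?q^k \<le> ?q^t * card (Ker G k (U \<union> T1))"
          using U(4) card_mono[OF finite_Ker KK] by (meson le_trans mult_le_mono2)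
        have "card T1 \<le> card (U \<union> T1)" using U(1) finT1 by (simp add: card_mono)
        moreover have "r1*j + m*(\<delta>1-1) \<le> card T1" using hm jm by blast
        ultimately have c: "t + m*(\<delta>1-1) \<le> card (U \<union> T1)" using tj by linarith
        have f: "finite (U \<union> T1)" "U \<union> T1 \<subseteq> {1..n}" using U finT1 T1n by auto
        show ?thesis using f c K U(3) by blast
      qed
    qed
  qed
  then have "?Q m" by simp
  then show ?thesis by auto
qed

lemma phase2:
  fixes G :: "nat \<Rightarrow> nat \<Rightarrow> 'a::{finite,field}"
  assumes rank: "full_rank G k n" and T1n: "T1 \<subseteq> {1..n}"
    and loc1: "locality_on G k n T1 r1 \<delta>1" and loc2: "locality_on G k n ({1..n} - T1) r2 \<delta>2"
    and rr: "r1 \<le> r2" and dd: "\<delta>2 \<le> \<delta>1" "1 \<le> \<delta>2"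
    and U0: "finite U0" "U0 \<subseteq> {1..n}" "card (UNIV::'a set)^k \<le> card (UNIV::'a set)^t0 * card (Ker G k U0)"
       "t0 + R0 \<le> card U0"
    and tk: "t0 + r2*L < k"
  shows "\<exists>U t. finite U \<and> U \<subseteq> {1..n} \<and> t \<le> t0 + r2*L \<and>
     card (UNIV::'a set)^k \<le> card (UNIV::'a set)^t * card (Ker G k U) \<and> t + R0 + L*(\<delta>2-1) \<le> card U"
  using tk
proof (induction L)
  case 0
  then show ?case using U0 by (intro exI[of _ U0] exI[of _ t0]) simp
next
  case (Suc L)
  let ?q = "card (UNIV::'a set)"
  have "t0 + r2*L < k" using Suc.prems by simp
  from Suc.IH[OF this] obtain U t where U: "finite U" "U \<subseteq> {1..n}" "t \<le> t0 + r2*L"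
    "?q^k \<le> ?q^t * card (Ker G k U)" "t + R0 + L*(\<delta>2-1) \<le> card U" by blast
  have tk': "t < k" using U(3) Suc.prems by simp
  obtain m0 i where mi: "m0 \<in> Ker G k U" "i \<in> {1..n}" "codeword G k m0 i \<noteq> 0"
    using nonzero_in_Ker[OF rank U(4) tk'] by blast
  have "\<exists>S rr d. S \<subseteq> {1..n} \<and> i \<in> S \<and> good_group G k S rr d \<and> rr \<le> r2 \<and> \<delta>2 \<le> d"
  proof (cases "i \<in> T1")
    case True
    then obtain S where "S \<subseteq> T1" "i \<in> S" "good_group G k S r1 \<delta>1"
      using locality_group[OF loc1 _ True] dd by force
    then show ?thesis using T1n rr dd by blast
  next
    case False
    then have "i \<in> {1..n} - T1" using mi by simp
    then obtain S where "S \<subseteq> {1..n} - T1" "i \<in> S" "good_group G k S r2 \<delta>2"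
      using locality_group[OF loc2 dd(2)] by blast
    then show ?thesis by blast
  qed
  then obtain S rr d where S: "S \<subseteq> {1..n}" "i \<in> S" "good_group G k S rr d" "rr \<le> r2" "\<delta>2 \<le> d" by blast
  obtain a where a: "a \<le> rr" "card (U \<union> S) = card U + a + (d-1)"
    "card (Ker G k U) \<le> ?q^a * card (Ker G k (U \<union> S))"
    using greedy_step[OF U(1) S(3) S(2) mi(1,3)] by blast
  have "?q^t * card (Ker G k U) \<le> ?q^t * (?q^a * card (Ker G k (U \<union> S)))"
    using a(3) by (rule mult_le_mono2)
  then have K0: "?q^k \<le> ?q^t * (?q^a * card (Ker G k (U \<union> S)))"
    using U(4) by (rule le_trans[rotated])
  have eq: "?q^t * (?q^a * card (Ker G k (U \<union> S))) = ?q^(t+a) * card (Ker G k (U \<union> S))"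
    by (simp only: power_add mult.assoc)
  have K: "?q^k \<le> ?q^(t+a) * card (Ker G k (U \<union> S))" using K0 by (simp only: eq)
  have t1: "t + a \<le> t0 + r2 * Suc L" using U(3) a(1) S(4) by simp
  have c: "t + a + R0 + Suc L*(\<delta>2-1) \<le> card (U \<union> S)" using U(5) a(2) S(5) by simp
  have f: "finite (U \<union> S)" "U \<union> S \<subseteq> {1..n}" using U S(1) S(3) unfolding good_group_def by auto
  show ?case using f t1 c K by blast
qed

lemma phase3:
  fixes G :: "nat \<Rightarrow> nat \<Rightarrow> 'a::{finite,field}"
  assumes rank: "full_rank G k n" and dist: "d = min_dist G k n"
  shows "k - 1 - t = s \<Longrightarrow> finite U \<Longrightarrow> U \<subseteq> {1..n} \<Longrightarrow>
     card (UNIV::'a set)^k \<le> card (UNIV::'a set)^t * card (Ker G k U) \<Longrightarrow> t < k \<Longrightarrow>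
     t + R \<le> card U \<Longrightarrow> d + (k - 1) + R \<le> n"
proof (induction s arbitrary: U t)
  case 0
  obtain m0 i where mi: "m0 \<in> Ker G k U" "i \<in> {1..n}" "codeword G k m0 i \<noteq> 0"
    using nonzero_in_Ker[OF rank 0(4) 0(5)] by blast
  define W where "W = {i\<in>{1..n}. codeword G k m0 i \<noteq> 0}"
  have "W \<subseteq> {1..n} - U" using mi(1) unfolding W_def Ker_def by auto
  then have "card W \<le> card ({1..n} - U)" by (intro card_mono) auto
  also have "\<dots> = n - card U" using 0(3) by (simp add: card_Diff_subset 0(2))
  finally have cW: "card W \<le> n - card U" .
  define D where "D = {card {i\<in>{1..n}. codeword G k m i \<noteq> 0} | m. \<exists>i\<in>{1..n}. codeword G k m i \<noteq> 0}"
  have "D \<subseteq> {..n}" unfolding D_def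
  proof
    fix x assume "x \<in> {card {i\<in>{1..n}. codeword G k m i \<noteq> 0} | m. \<exists>i\<in>{1..n}. codeword G k m i \<noteq> 0}"
    then obtain m where x: "x = card {i\<in>{1..n}. codeword G k m i \<noteq> 0}" by blast
    have "card {i\<in>{1..n}. codeword G k m i \<noteq> 0} \<le> card {1..n}" by (rule card_mono) auto
    then show "x \<in> {..n}" using x by simp
  qed
  then have finD: "finite D" using finite_subset by blast
  have "card W \<in> D" unfolding D_def W_def using mi by blast
  then have "d \<le> card W" using finD unfolding dist min_dist_def D_def[symmetric] by (rule Min_le[rotated])
  moreover have "t = k - 1" using 0 by simp
  moreover have "card U \<le> n" using 0(3) card_mono[of "{1..n}" U] by simp
  ultimately show ?case using cW 0(6) by linarith
next
  case (Suc s)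
  let ?q = "card (UNIV::'a set)"
  obtain m0 i where mi: "m0 \<in> Ker G k U" "i \<in> {1..n}" "codeword G k m0 i \<noteq> 0"
    using nonzero_in_Ker[OF rank Suc(5) Suc(6)] by blast
  have iU: "i \<notin> U" using mi unfolding Ker_def by auto
  have "card (Ker G k U) \<le> ?q * card (Ker G k (insert i U))" by (rule Ker_insert_card)
  then have "?q^t * card (Ker G k U) \<le> ?q^t * (?q * card (Ker G k (insert i U)))"
    by (rule mult_le_mono2)
  then have K0: "?q^k \<le> ?q^t * (?q * card (Ker G k (insert i U)))"
    using Suc(5) by (rule le_trans[rotated])
  have eq: "?q^t * (?q * card (Ker G k (insert i U))) = ?q^(Suc t) * card (Ker G k (insert i U))"
    by (simp add: ac_simps)
  have K: "?q^k \<le> ?q^(Suc t) * card (Ker G k (insert i U))" using K0 by (simp only: eq)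
  have "k - 1 - Suc t = s" "Suc t < k" using Suc(2) by auto
  moreover have "Suc t + R \<le> card (insert i U)" using Suc(7) iU Suc(3) by simp
  ultimately show ?case using Suc.IH[of "Suc t" "insert i U"] Suc(3,4) mi(2) K by simp
qed



theorem theorem1:
  fixes G :: "nat \<Rightarrow> nat \<Rightarrow> 'a::{finite,field}"
    and n k d r1 r2 \<delta>1 \<delta>2 n1 :: nat and T1 :: "nat set"
  assumes rank: "full_rank G k n"
    and dist: "d = min_dist G k n"
    and loc: "two_localities G k n T1 r1 \<delta>1 r2 \<delta>2"
    and r1pos: "1 \<le> r1"
    and n1: "n1 = card T1"
    and h1: "int r1 * \<lceil>real n1 / real (r1 + \<delta>1 - 1)\<rceil> \<le> int k - 1"
    and h2: "int r1 * \<lceil>(real_of_int (\<lceil>real n1 / real (r1 + \<delta>1 - 1)\<rceil> * (int \<delta>1 - 1)) - 1)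
                        / real (\<delta>1 - 1)\<rceil>
             + (\<lceil>real n1 / real (r1 + \<delta>1 - 1)\<rceil> * (int \<delta>1 - 1) - 1) < int n1"
  shows "int d \<le> int n - int k + 1 - \<lceil>real n1 / real (r1 + \<delta>1 - 1)\<rceil> * (int \<delta>1 - 1)
           - (\<lceil>real_of_int (int k - int r1 * \<lceil>real n1 / real (r1 + \<delta>1 - 1)\<rceil>) / real r2\<rceil> - 1)
             * (int \<delta>2 - 1)"
proof -
  have T1n: "T1 \<subseteq> {1..n}" and rr: "r1 \<le> r2" and dd: "\<delta>2 \<le> \<delta>1" "2 \<le> \<delta>2"
    and loc1: "locality_on G k n T1 r1 \<delta>1" and loc2: "locality_on G k n ({1..n} - T1) r2 \<delta>2"
    using loc unfolding two_localities_def by auto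
  define mi where "mi = \<lceil>real n1 / real (r1 + \<delta>1 - 1)\<rceil>"
  have z: "0 \<le> real n1 / real (r1 + \<delta>1 - 1)" by simp
  have mi0: "0 \<le> mi" unfolding mi_def using ceiling_mono[OF z] by simp
  define m where "m = nat mi"
  have mm: "int m = mi" using mi0 m_def by simp
  have d1: "int (\<delta>1 - 1) = int \<delta>1 - 1" using dd by simp
  have d2: "int (\<delta>2 - 1) = int \<delta>2 - 1" using dd by simp
  have k0: "int (r1 * m) \<le> int k - 1" using h1 unfolding mi_def[symmetric] mm[symmetric] by simp
  then have k1: "r1 * m + 1 \<le> k" by linarith
  define X where "X = \<lceil>(real_of_int (mi * (int \<delta>1 - 1)) - 1) / real (\<delta>1 - 1)\<rceil>"
  have h2': "int r1 * X + (mi * (int \<delta>1 - 1) - 1) < int n1" using h2 unfolding X_def mi_def .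
  have "real_of_int (mi - 1) \<le> (real_of_int (mi * (int \<delta>1 - 1)) - 1) / real (\<delta>1 - 1)"
  proof -
    have pos: "real (\<delta>1 - 1) > 0" using dd by simp
    have e: "real (\<delta>1 - 1) = real_of_int (int \<delta>1 - 1)" using dd by (simp add: of_nat_diff)
    have "real_of_int (mi - 1) * real (\<delta>1 - 1) \<le> real_of_int (mi * (int \<delta>1 - 1)) - 1"
      unfolding e using dd by (simp add: algebra_simps)
    then show ?thesis using pos by (simp add: pos_le_divide_eq)
  qed
  then have "mi - 1 \<le> X" unfolding X_def by (simp add: le_ceiling_iff)
  then have "int r1 * (mi - 1) \<le> int r1 * X" by (simp add: mult_left_mono)
  with h2' have hh: "int r1 * (mi - 1) + mi * (int \<delta>1 - 1) \<le> int n1" by linarith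
  have hm: "r1*j + m*(\<delta>1-1) \<le> card T1" if "j < m" for j
  proof -
    have "int j \<le> mi - 1" using that mm by linarith
    then have "int r1 * int j \<le> int r1 * (mi - 1)" by (simp add: mult_left_mono)
    with hh have "int (r1*j + m*(\<delta>1-1)) \<le> int n1" using mm d1 by simp
    then have "r1*j + m*(\<delta>1-1) \<le> n1" by (simp only: of_nat_le_iff)
    with n1 show ?thesis by simp
  qed
  let ?q = "card (UNIV::'a set)"
  obtain U0 t0 where U0: "finite U0" "U0 \<subseteq> {1..n}" "t0 \<le> r1*m"
      "?q^k \<le> ?q^t0 * card (Ker G k U0)" "t0 + m*(\<delta>1-1) \<le> card U0"
    using phase1[OF T1n loc1 _ hm] dd by fastforce
  define Y where "Y = \<lceil>real_of_int (int k - int r1 * mi) / real r2\<rceil>"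
  define L where "L = nat (Y - 1)"
  have r2pos: "real r2 > 0" using rr r1pos by simp
  have xpos: "int k - int r1 * mi \<ge> 1" using h1 mi_def by simp
  have xr: "0 < real_of_int (int k - int r1 * mi)" using xpos by (simp only: of_int_0_less_iff)
  have "real_of_int (int k - int r1 * mi) / real r2 > 0" using xr r2pos by (rule divide_pos_pos)
  then have Y1: "Y \<ge> 1" unfolding Y_def by (simp add: zero_less_ceiling le_ceiling_iff)
  have LY: "int L = Y - 1" using Y1 L_def by simp
  have "real_of_int Y - 1 < real_of_int (int k - int r1 * mi) / real r2"
    unfolding Y_def by (rule ceiling_correct[THEN conjunct1]) 
  then have "(real_of_int Y - 1) * real r2 < real_of_int (int k - int r1 * mi)"
    using r2pos by (simp add: pos_less_divide_eq)
  then have "real_of_int ((Y - 1) * int r2) < real_of_int (int k - int r1 * mi)" by simp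
  then have "(Y - 1) * int r2 < int k - int r1 * mi" by linarith
  then have "int (r2 * L) < int k - int r1 * int m" using LY mm by (simp add: mult.commute)
  then have "int (r2*L + r1*m) < int k" by simp
  then have "r2*L + r1*m < k" by (simp only: of_nat_less_iff)
  then have tk: "t0 + r2*L < k" using U0(3) by linarith
  obtain U t where U: "finite U" "U \<subseteq> {1..n}" "t \<le> t0 + r2*L"
      "?q^k \<le> ?q^t * card (Ker G k U)" "t + m*(\<delta>1-1) + L*(\<delta>2-1) \<le> card U"
    using phase2[OF rank T1n loc1 loc2 rr dd(1) _ U0(1,2,4,5) tk] dd by fastforce
  have "t < k" using U(3) tk by linarith
  then have fin: "d + (k - 1) + (m*(\<delta>1-1) + L*(\<delta>2-1)) \<le> n"
    using phase3[OF rank dist refl U(1,2,4)] U(5) by (simp add: add.assoc)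
  then have "int (d + (k - 1) + (m*(\<delta>1-1) + L*(\<delta>2-1))) \<le> int n" by (simp only: of_nat_le_iff)
  then have "int d + int (k - 1) + (int m * int (\<delta>1-1) + int L * int (\<delta>2-1)) \<le> int n"
    by (simp only: of_nat_add of_nat_mult)
  moreover have "int (k - 1) = int k - 1" using k1 by simp
  ultimately have "int d + (int k - 1) + (mi * (int \<delta>1 - 1) + (Y - 1) * (int \<delta>2 - 1)) \<le> int n"
    unfolding mm LY d1 d2 by simp
  then show ?thesis unfolding mi_def[symmetric] Y_def[symmetric] by linarith
qed

end
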